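(* Let $\gamma>0$, $\tau>3$, $\alpha\in D_{\gamma,\tau}$, and let $p_n/q_n$ be the convergents of $\alpha$; for even $n$ let $I_n:=\left(\frac{p_n}{q_n},\frac{p_{n+2}}{q_{n+2}}\right)$. There exists $N_1\in\mathbb{N}$ such that for every even $n>N_1$ and every rational $p/q$ ($q\in\mathbb{N}$): $$\frac{p}{q}\in I_n,\ q<q_{n+2}\ \Longrightarrow\ \frac{p}{q}+\frac{\gamma}{q^{\tau+1}}<\frac{p_{n+2}}{q_{n+2}}-\frac{\gamma}{q_{n+2}^{\tau+1}}-\frac{2\gamma}{q_{n+2}^{\tau-1}}.$$
   Context: For $x\in\mathbb{R}$, $\|x\|:=\min_{p\in\mathbb{Z}}|x-p|$; $\mathbb{N}=\{1,2,\dots\}$. For $\gamma>0,\tau\ge1$, $D_{\gamma,\tau}:=\{\alpha\in(0,1): \|q\alpha\|\ge\gamma/q^\tau\ \forall q\in\mathbb{N}\}$; its elements are irrational. For irrational $\alpha\in(0,1)$ write $\alpha=\cfrac{1}{a_1+\cfrac{1}{a_2+\cdots}}$, and let $p_n/q_n$ ($n\ge0$) be its convergents: $p_{-1}=1,q_{-1}=0,p_0=0,q_0=1$, $p_n=a_np_{n-1}+p_{n-2}$, $q_n=a_nq_{n-1}+q_{n-2}$. *)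

theory Defs
  imports "HOL-Analysis.Analysis"
begin

definition dist_int :: "real \<Rightarrow> real" where
  "dist_int x = min (x - of_int \<lfloor>x\<rfloor>) (of_int \<lceil>x\<rceil> - x)"

definition Dio :: "real \<Rightarrow> real \<Rightarrow> real set" where
  "Dio \<gamma> \<tau> = {\<alpha>. 0 < \<alpha> \<and> \<alpha> < 1 \<and>
      (\<forall>q::nat. q \<ge> 1 \<longrightarrow> dist_int (real q * \<alpha>) \<ge> \<gamma> / real q powr \<tau>)}"

fun cf_rem :: "real \<Rightarrow> nat \<Rightarrow> real" where
  "cf_rem \<alpha> 0 = \<alpha>"
| "cf_rem \<alpha> (Suc n) = frac (1 / cf_rem \<alpha> n)"

definition cf_a :: "real \<Rightarrow> nat \<Rightarrow> int" where
  "cf_a \<alpha> n = \<lfloor>1 / cf_rem \<alpha> (n - 1)\<rfloor>"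

text \<open>Shifted numerators/denominators: cfP k = p_{k-1}, cfQ k = q_{k-1}.\<close>
fun cfP :: "real \<Rightarrow> nat \<Rightarrow> int" where
  "cfP \<alpha> 0 = 1"
| "cfP \<alpha> (Suc 0) = 0"
| "cfP \<alpha> (Suc (Suc k)) = cf_a \<alpha> (Suc k) * cfP \<alpha> (Suc k) + cfP \<alpha> k"

fun cfQ :: "real \<Rightarrow> nat \<Rightarrow> int" where
  "cfQ \<alpha> 0 = 0"
| "cfQ \<alpha> (Suc 0) = 1"
| "cfQ \<alpha> (Suc (Suc k)) = cf_a \<alpha> (Suc k) * cfQ \<alpha> (Suc k) + cfQ \<alpha> k"

definition conv_p :: "real \<Rightarrow> nat \<Rightarrow> int" where
  "conv_p \<alpha> n = cfP \<alpha> (Suc n)"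

definition conv_q :: "real \<Rightarrow> nat \<Rightarrow> int" where
  "conv_q \<alpha> n = cfQ \<alpha> (Suc n)"

end

theory Submission
  imports Defs
begin

lemma cf_det: "cfP \<alpha> (Suc k) * cfQ \<alpha> k - cfP \<alpha> k * cfQ \<alpha> (Suc k) = (-1) ^ Suc k"
proof (induction k)
  case 0 then show ?case by simp
next
  case (Suc k)
  have "cfP \<alpha> (Suc (Suc k)) * cfQ \<alpha> (Suc k) - cfP \<alpha> (Suc k) * cfQ \<alpha> (Suc (Suc k))
     = - (cfP \<alpha> (Suc k) * cfQ \<alpha> k - cfP \<alpha> k * cfQ \<alpha> (Suc k))"
    by (simp add: algebra_simps)
  then show ?case using Suc by simp
qed

lemma Dio_irrat:
  assumes "\<gamma> > 0" "\<alpha> \<in> Dio \<gamma> \<tau>" shows "\<alpha> \<notin> \<rat>"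
proof
  assume "\<alpha> \<in> \<rat>"
  then obtain a b :: int where b: "b > 0" and ab: "\<alpha> = of_int a / of_int b" by (elim Rats_cases')
  have "real (nat b) \<ge> 1" using b by simp
  with assms have "dist_int (real (nat b) * \<alpha>) \<ge> \<gamma> / real (nat b) powr \<tau>"
    by (auto simp: Dio_def)
  moreover have "real (nat b) * \<alpha> = of_int a" using b ab by simp
  moreover have "\<gamma> / real (nat b) powr \<tau> > 0" using b assms by simp
  ultimately show False by (simp add: dist_int_def)
qed

lemma frac_irrat: assumes "x \<notin> \<rat>" shows "frac (1/x) \<notin> \<rat>" "0 < frac (1/x)" "frac (1/x) < 1"
proof -
  have i1: "1/x \<notin> \<rat>"
  proof
    assume "1/x \<in> \<rat>"
    then have "1/(1/x) \<in> \<rat>" using Rats_divide[OF Rats_1] by blast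
    then show False using assms by simp
  qed
  show i2: "frac (1/x) \<notin> \<rat>"
  proof
    assume "frac (1/x) \<in> \<rat>"
    then have "frac (1/x) + of_int \<lfloor>1/x\<rfloor> \<in> \<rat>" by (intro Rats_add) auto
    then show False using i1 by (simp add: frac_def)
  qed
  then have "frac (1/x) \<noteq> 0" by (metis Rats_0)
  then show "0 < frac (1/x)" using frac_ge_0[of "1/x"] by linarith
  show "frac (1/x) < 1" by (rule frac_lt_1)
qed

lemma cf_rem_props:
  assumes "\<alpha> \<notin> \<rat>" "0 < \<alpha>" "\<alpha> < 1"
  shows "cf_rem \<alpha> k \<notin> \<rat> \<and> 0 < cf_rem \<alpha> k \<and> cf_rem \<alpha> k < 1"
  using assms by (induction k) (auto dest: frac_irrat)

lemma cf_a_pos: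
  assumes "\<alpha> \<notin> \<rat>" "0 < \<alpha>" "\<alpha> < 1"
  shows "cf_a \<alpha> k \<ge> 1"
proof -
  let ?x = "cf_rem \<alpha> (k - 1)"
  have "0 < ?x" "?x < 1" using cf_rem_props[OF assms] by auto
  then have "1 / ?x > 1" by simp
  then show ?thesis unfolding cf_a_def by linarith
qed

lemma cfQ_grow:
  assumes "\<And>k. cf_a \<alpha> k \<ge> 1"
  shows "cfQ \<alpha> k \<ge> 0 \<and> cfQ \<alpha> (Suc k) \<ge> 1 \<and> cfQ \<alpha> (Suc k) \<ge> int k \<and> (k \<ge> 1 \<longrightarrow> cfQ \<alpha> k \<ge> 1)"
proof (induction k)
  case 0 then show ?case by simp
next
  case (Suc k)
  note IH = Suc.IH
  have a: "cf_a \<alpha> (Suc k) \<ge> 1" by (rule assms)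
  have e: "cfQ \<alpha> (Suc (Suc k)) = cf_a \<alpha> (Suc k) * cfQ \<alpha> (Suc k) + cfQ \<alpha> k" by simp
  have "cf_a \<alpha> (Suc k) * cfQ \<alpha> (Suc k) \<ge> cfQ \<alpha> (Suc k)"
    using a IH by (metis mult_right_mono mult_1 order_trans zero_le_one)
  then have c1: "cfQ \<alpha> (Suc (Suc k)) \<ge> cfQ \<alpha> (Suc k) + cfQ \<alpha> k" using e by linarith
  have c2: "cfQ \<alpha> (Suc (Suc k)) \<ge> int (Suc k)"
  proof (cases k)
    case 0
    then show ?thesis using a e by simp
  next
    case (Suc m)
    then have "cfQ \<alpha> k \<ge> 1" using IH Suc by simp
    then show ?thesis using c1 IH by linarith
  qed
  have c3: "cfQ \<alpha> (Suc (Suc k)) \<ge> 1" using c1 IH by linarith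
  show ?case using c2 c3 IH by simp
qed


lemma final_est:
  fixes x y \<gamma> \<tau> D :: real
  assumes "\<gamma> > 0" "\<tau> > 3" "x \<ge> 1" "y > x"
    and A: "x powr (\<tau> - 3) > 6*\<gamma>+1" and B: "y powr (\<tau> - 3) > 6*\<gamma>+1"
    and D1: "D \<ge> 1/(2*x^2)" and D2: "D \<ge> 1/(x*y)"
  shows "\<gamma> / x powr (\<tau>+1) + \<gamma> / y powr (\<tau>+1) + 2*\<gamma> / y powr (\<tau>-1) < D"
proof -
  define a where "a = x powr (\<tau> - 3)"
  define b where "b = y powr (\<tau> - 3)"
  have x0: "x > 0" "y > 1" using assms by auto
  have ex: "x powr (\<tau>+1) = a * x^4"
  proof -
    have "x powr (\<tau>+1) = x powr (\<tau> - 3) * x powr 4"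
      using powr_add[of x "\<tau>-3" 4] by (simp add: algebra_simps)
    then show ?thesis using x0 unfolding a_def by simp
  qed
  have ey: "y powr (\<tau>+1) = b * y^4"
  proof -
    have "y powr (\<tau>+1) = y powr (\<tau> - 3) * y powr 4"
      using powr_add[of y "\<tau>-3" 4] by (simp add: algebra_simps)
    then show ?thesis using x0 unfolding b_def by simp
  qed
  have ey2: "y powr (\<tau>-1) = b * y^2"
  proof -
    have "y powr (\<tau>-1) = y powr (\<tau> - 3) * y powr 2"
      using powr_add[of y "\<tau>-3" 2] by (simp add: algebra_simps)
    then show ?thesis using x0 unfolding b_def by simp
  qed
  have a: "a > 6*\<gamma>+1" and b: "b > 6*\<gamma>+1" using A B a_def b_def by auto
  have x4: "x^4 \<ge> x^2" using assms(3) by (simp add: power_increasing)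
  have y4: "y^4 \<ge> y^2" using x0 by (simp add: power_increasing)
  have t1: "\<gamma> / (a * x^4) < 1/(6*x^2)"
  proof -
    have "\<gamma> / (a * x^4) \<le> \<gamma> / (a * x^2)"
      using a x4 x0 assms(1) by (intro divide_left_mono) (auto intro!: mult_pos_pos)
    also have "\<dots> < 1/(6*x^2)" using a x0 assms(1) by (simp add: field_simps)
    finally show ?thesis .
  qed
  have t2: "\<gamma> / (b * y^4) \<le> 1/(6*y^2)"
  proof -
    have "\<gamma> / (b * y^4) \<le> \<gamma> / (b * y^2)"
      using b y4 x0 assms(1) by (intro divide_left_mono) (auto intro!: mult_pos_pos)
    also have "\<dots> \<le> 1/(6*y^2)" using b x0 assms(1) by (simp add: field_simps)
    finally show ?thesis .
  qed
  have t3: "2*\<gamma> / (b * y^2) \<le> 1/(3*y^2)" using b x0 assms(1) by (simp add: field_simps)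
  have yy: "1/y^2 \<le> 1/(x*y)" using x0 assms(4)
    by (intro divide_left_mono) (auto simp: power2_eq_square intro!: mult_right_mono)
  have pos: "1/(x*y) > 0" using x0 by simp
  have "1/(6*x^2) \<le> D/3" using D1 by (simp add: field_simps)
  moreover have "1/(6*y^2) + 1/(3*y^2) = (1/y^2)/2" by (simp add: field_simps)
  ultimately show ?thesis unfolding ex ey ey2 using t1 t2 t3 yy D2 x0 pos by linarith
qed

lemma N1_exists:
  fixes c \<tau> :: real assumes "\<tau> > 3" "c > 0"
  shows "\<exists>N1::nat. N1 \<ge> 1 \<and> (\<forall>x::real. x > real N1 \<longrightarrow> x powr (\<tau> - 3) > c)"
proof (intro exI conjI allI impI)
  let ?N = "nat \<lceil>c powr (1/(\<tau>-3))\<rceil> + 1"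
  show "?N \<ge> 1" by simp
  fix x :: real assume "x > real ?N"
  then have "x > c powr (1/(\<tau>-3))" by linarith
  then have "(c powr (1/(\<tau>-3))) powr (\<tau>-3) < x powr (\<tau>-3)"
    using assms by (intro powr_less_mono2) auto
  moreover have "(c powr (1/(\<tau>-3))) powr (\<tau>-3) = c" using assms by (simp add: powr_powr)
  ultimately show "x powr (\<tau> - 3) > c" by simp
qed


theorem lemma2:
  fixes \<gamma> \<tau> \<alpha> :: real
  assumes "\<gamma> > 0" and "\<tau> > 3" and "\<alpha> \<in> Dio \<gamma> \<tau>"
  shows "\<exists>N1::nat. N1 \<ge> 1 \<and> (\<forall>n::nat. \<forall>p::int. \<forall>q::nat.
     even n \<and> n > N1 \<and> q \<ge> 1 \<and>
     of_int (conv_p \<alpha> n) / of_int (conv_q \<alpha> n) < of_int p / real q \<and>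
     of_int p / real q < of_int (conv_p \<alpha> (n+2)) / of_int (conv_q \<alpha> (n+2)) \<and>
     int q < conv_q \<alpha> (n+2)
     \<longrightarrow> of_int p / real q + \<gamma> / real q powr (\<tau> + 1)
         < of_int (conv_p \<alpha> (n+2)) / of_int (conv_q \<alpha> (n+2))
           - \<gamma> / real_of_int (conv_q \<alpha> (n+2)) powr (\<tau> + 1)
           - 2 * \<gamma> / real_of_int (conv_q \<alpha> (n+2)) powr (\<tau> - 1))"
proof -
  have a01: "0 < \<alpha>" "\<alpha> < 1" using assms(3) by (auto simp: Dio_def)
  have irr: "\<alpha> \<notin> \<rat>" using Dio_irrat assms(1,3) by blast
  have apos: "\<And>k. cf_a \<alpha> k \<ge> 1" using cf_a_pos[OF irr a01] .
  note gr = cfQ_grow[of \<alpha>, OF apos]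
  obtain N1 :: nat where N1: "N1 \<ge> 1" and N1x: "\<And>x::real. x > real N1 \<Longrightarrow> x powr (\<tau> - 3) > 6*\<gamma>+1"
    using N1_exists[of \<tau> "6*\<gamma>+1"] assms(1,2) by auto
  show ?thesis
  proof (intro exI[of _ N1] conjI N1 allI impI)
    fix n :: nat and p :: int and q :: nat
    assume H: "even n \<and> n > N1 \<and> q \<ge> 1 \<and>
     of_int (conv_p \<alpha> n) / of_int (conv_q \<alpha> n) < of_int p / real q \<and>
     of_int p / real q < of_int (conv_p \<alpha> (n+2)) / of_int (conv_q \<alpha> (n+2)) \<and>
     int q < conv_q \<alpha> (n+2)"
    define s where "s = conv_q \<alpha> n"
    define r where "r = conv_q \<alpha> (n+1)"
    define Q where "Q = conv_q \<alpha> (n+2)"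
    define P0 where "P0 = conv_p \<alpha> n"
    define P1 where "P1 = conv_p \<alpha> (n+1)"
    define P2 where "P2 = conv_p \<alpha> (n+2)"
    define qi where "qi = int q"
    have ev: "even n" and nN: "n > N1" and q1: "qi \<ge> 1" using H qi_def by auto
    have rq: "real q = of_int qi" using qi_def by simp
    have s1: "s \<ge> 1" unfolding s_def conv_q_def using gr[of n] by auto
    have r1: "r \<ge> 1" "r \<ge> int n + 1" unfolding r_def conv_q_def using gr[of "Suc n"] by auto
    have Q1: "Q \<ge> 1" unfolding Q_def conv_q_def using gr[of "Suc (Suc n)"] by auto
    have qQ: "qi < Q" using H qi_def Q_def by simp
    have det1: "P1 * s - P0 * r = 1"
      using cf_det[of \<alpha> "Suc n"] ev unfolding P1_def s_def P0_def r_def conv_p_def conv_q_def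
      by simp
    have det2: "P2 * r - P1 * Q = -1"
      using cf_det[of \<alpha> "Suc (Suc n)"] ev unfolding P1_def r_def P2_def Q_def conv_p_def conv_q_def
      by simp
    have h1: "of_int P0 / of_int s < of_int p / (of_int qi :: real)"
      using H unfolding P0_def s_def rq by simp
    have h2: "of_int p / (of_int qi :: real) < of_int P2 / of_int Q"
      using H unfolding P2_def Q_def rq by simp
    have "real_of_int (P0 * qi) < real_of_int (p * s)"
      using h1 s1 q1 by (simp add: field_simps)
    then have iA: "P0 * qi < p * s" by (simp only: of_int_less_iff)
    have "real_of_int (p * Q) < real_of_int (P2 * qi)"
      using h2 Q1 q1 by (simp add: field_simps)
    then have iC: "p * Q < P2 * qi" by (simp only: of_int_less_iff)
    have "(p * Q) * r < (P2 * qi) * r" using iC r1 by (intro mult_strict_right_mono) auto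
    moreover have "(P2 * r) * qi < (P1 * Q) * qi" using det2 q1 by (intro mult_strict_right_mono) auto
    ultimately have "Q * (p * r) < Q * (P1 * qi)" by (simp add: algebra_simps)
    then have iB: "p * r < P1 * qi" using Q1 by simp
    define A where "A = p * s - P0 * qi"
    define B where "B = P1 * qi - p * r"
    define C where "C = P2 * qi - p * Q"
    have A1: "A \<ge> 1" "B \<ge> 1" "C \<ge> 1" using iA iB iC A_def B_def C_def by auto
    have idq: "r * A + s * B = qi"
    proof -
      have "r * A + s * B = qi * (P1 * s - P0 * r)" unfolding A_def B_def by (simp add: algebra_simps)
      then show ?thesis using det1 by simp
    qed
    have idQ: "Q * B - r * C = qi"
    proof -
      have "Q * B - r * C = qi * (P1 * Q - P2 * r)" unfolding C_def B_def by (simp add: algebra_simps)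
      then show ?thesis using det2 by simp
    qed
    have rA: "r * A \<ge> r" "s * B \<ge> s" "Q * B \<ge> Q" using A1 r1 s1 Q1 by auto
    have qr: "qi \<ge> r" using idq rA s1 by linarith
    have key: "2 * qi * C \<ge> Q"
    proof (cases "Q \<le> 2 * qi")
      case True
      have "qi * C \<ge> qi" using A1 q1 by auto
      then show ?thesis using True by linarith
    next
      case False
      have "r * C \<ge> Q - qi" using idQ rA by linarith
      moreover have "qi * C \<ge> r * C" using qr A1 by (intro mult_right_mono) auto
      ultimately show ?thesis using False by linarith
    qed
    define x where "x = real_of_int qi"
    define y where "y = real_of_int Q"
    define D where "D = real_of_int P2 / y - of_int p / x"
    have x1: "x \<ge> 1" and xy: "y > x" using q1 qQ x_def y_def by auto
    have Dform: "D = of_int C / (x * y)"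
      unfolding D_def C_def x_def y_def using x1 xy x_def y_def by (simp add: field_simps)
    have xN: "x > real N1" using qr r1 nN x_def by linarith
    have D1: "D \<ge> 1/(2*x^2)"
    proof -
      have "real_of_int (2 * qi * C) \<ge> real_of_int Q" using key by (simp only: of_int_le_iff)
      then have "2 * x * of_int C \<ge> y" unfolding x_def y_def by simp
      then show ?thesis unfolding Dform using x1 xy by (simp add: field_simps power2_eq_square)
    qed
    have D2: "D \<ge> 1/(x*y)"
    proof -
      have "real_of_int C \<ge> 1" using A1 by simp
      then show ?thesis unfolding Dform using x1 xy by (simp add: divide_right_mono)
    qed
    have est: "\<gamma> / x powr (\<tau>+1) + \<gamma> / y powr (\<tau>+1) + 2*\<gamma> / y powr (\<tau>-1) < D"
      using final_est[OF assms(1,2) x1 xy N1x N1x D1 D2] xN xy by linarith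
    then show "of_int p / real q + \<gamma> / real q powr (\<tau> + 1)
         < of_int (conv_p \<alpha> (n+2)) / of_int (conv_q \<alpha> (n+2))
           - \<gamma> / real_of_int (conv_q \<alpha> (n+2)) powr (\<tau> + 1)
           - 2 * \<gamma> / real_of_int (conv_q \<alpha> (n+2)) powr (\<tau> - 1)"
      unfolding D_def x_def y_def rq[symmetric] P2_def Q_def by linarith
  qed
qed

end
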